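(* Consider PATE-PSQ with SVT-based aggregation (context) run with $$T=\tilde{O}\Big(\Big(\frac{m^{2-\tau}d^{\tau}}{n^{\tau}\epsilon^{\tau}}\Big)^{\frac{2}{4-3\tau}}\Big),\qquad K=O\Big(\frac{\log(mT/\min(\delta,\beta))\sqrt{T\log(1/\delta)}}{\epsilon}\Big),$$ where $\tilde O$ hides polynomial factors of $\log(K/\gamma)$ and $\log(m/\beta)$. Assume $h^*\in\mathcal{H}$ is the Bayes optimal classifier and the Tsybakov noise condition with parameter $\tau$ holds, and condition on the events that (i) for all $k$, $\mathtt{Dis}(\hat h_k,h^* )\le C\big(\frac{dK\log(n/d)+\log(K/\gamma)}{n}\big)^{\tau/(2-\tau)}$, and (ii) for all $k$, $\sum_{j=1}^m\mathbbm{1}(\hat h_k(x_j)\ne h^*(x_j))\le O(\max\{m\,\mathtt{Dis}(\hat h_k,h^* ),\log(K/\gamma)\})$. Then with probability at least $1-\beta$ over the random coins of the algorithm alone, the algorithm finishes all $m$ queries without exhausting the cut-off budget and $$\sum_{j=1}^m\mathbbm{1}(\hat h^{\mathtt{priv}}_j\ne h^*(x_j))\le T.$$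
   Context: Feature space $\mathcal{X}$, labels $\{0,1\}$, distribution $\mathcal{D}$ with marginal $\mathcal{D}_\mathcal{X}$; $\mathcal{H}\subseteq\{0,1\}^\mathcal{X}$ of VC dimension $d$; $\mathtt{Err}$, $\mathtt{Dis}$ the population 0-1 error and disagreement. Bayes optimal $h^*(x)=\mathbbm{1}(\mathbb{E}[y|x]>1/2)$; Tsybakov noise condition: $\mathtt{Dis}(h,h^* )\le\eta(\mathtt{Err}(h)-\mathtt{Err}(h^* ))^\tau$ for all $h\in\mathcal{H}$, some $\eta\ge1$. $C$ is the constant from the teacher disagreement bound. Private data: $n$ i.i.d. samples; public $x_1,\dots,x_m$ i.i.d. from $\mathcal{D}_\mathcal{X}$. SVT-based aggregation (teachers $\hat h_1,\dots,\hat h_K$, queries $x_1,\dots,x_\ell$, cut-off $T$, $\epsilon,\delta$): $\lambda=(\sqrt{2T(\epsilon+\log(2/\delta))}+\sqrt{2T\log(2/\delta)})/\epsilon$, $w=3\lambda\log(2(\ell+T)/\delta)$, $\hat w=w+\mathtt{Lap}(\lambda)$, $c=0$; for each $j$: $\widehat\Delta(x_j)=|2\sum_k\hat h_k(x_j)-K|$, $\mathrm{dist}_j=\max\{0,\lceil\widehat\Delta(x_j)/2\rceil-1\}$, $\widehat{\mathrm{dist}}_j=\mathrm{dist}_j+\mathtt{Lap}(2\lambda)$; if $\widehat{\mathrm{dist}}_j>\hat w$ output $\mathbbm{1}(\sum_k\hat h_k(x_j)\ge K/2)$, else output $\perp$, $c\leftarrow c+1$, stop if $c\ge T$, resample $\hat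 w\leftarrow w+\mathtt{Lap}(\lambda)$. PATE-PSQ: randomly evenly split the private data into $K$ parts, train $\hat h_k\in\mathcal{H}$ by empirical risk minimization on part $k$, run the SVT-based aggregation with $\ell=m$ on $x_1,\dots,x_m$; $\hat h^{\mathtt{priv}}_j$ is the released pseudo-label of $x_j$ (with any $\perp$ replaced arbitrarily by a label in $\{0,1\}$). *)

theory Defs
  imports "HOL-Probability.Probability"
begin

text \<open>Labels \<open>{0,1}\<close> are rendered as bool (True = 1). The distribution D lives on
  X \<times> bool, where X carries the measurable space MX.\<close>

definition Err :: "('a \<times> bool) measure \<Rightarrow> ('a \<Rightarrow> bool) \<Rightarrow> real" where
  "Err D h = measure D {p \<in> space D. h (fst p) \<noteq> snd p}"

definition Dis :: "('a \<times> bool) measure \<Rightarrow> ('a \<Rightarrow> bool) \<Rightarrow> ('a \<Rightarrow> bool) \<Rightarrow> real" where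
  "Dis D h g = measure D {p \<in> space D. h (fst p) \<noteq> g (fst p)}"

text \<open>h is the Bayes optimal classifier 1(E[y|x] > 1/2): there is a version f of the
  regression function E[y|x] (a measurable [0,1]-valued function satisfying the defining
  property of conditional expectation w.r.t. the marginal D_X) with h x = (f x > 1/2).\<close>
definition bayes_optimal :: "'a measure \<Rightarrow> ('a \<times> bool) measure \<Rightarrow> ('a \<Rightarrow> bool) \<Rightarrow> bool" where
  "bayes_optimal MX D h \<longleftrightarrow>
     (\<exists>f. f \<in> borel_measurable MX \<and> (\<forall>x\<in>space MX. 0 \<le> f x \<and> f x \<le> 1) \<and>
          (\<forall>A\<in>sets MX. measure D {p \<in> space D. fst p \<in> A \<and> snd p}
                          = (\<integral>x\<in>A. f x \<partial>(distr D MX fst))) \<and>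
          (\<forall>x\<in>space MX. h x = (f x > 1/2)))"

definition tsybakov :: "('a \<times> bool) measure \<Rightarrow> ('a \<Rightarrow> bool) set \<Rightarrow> ('a \<Rightarrow> bool) \<Rightarrow> real \<Rightarrow> real \<Rightarrow> bool" where
  "tsybakov D H hs \<eta> \<tau> \<longleftrightarrow> (\<forall>h\<in>H. Dis D h hs \<le> \<eta> * (Err D h - Err D hs) powr \<tau>)"

definition shatters :: "('a \<Rightarrow> bool) set \<Rightarrow> 'a set \<Rightarrow> bool" where
  "shatters H A \<longleftrightarrow> (\<forall>B\<subseteq>A. \<exists>h\<in>H. \<forall>x\<in>A. h x = (x \<in> B))"

definition vc_dim :: "('a \<Rightarrow> bool) set \<Rightarrow> nat \<Rightarrow> bool" where
  "vc_dim H d \<longleftrightarrow> (\<exists>A. finite A \<and> card A = d \<and> shatters H A) \<and>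
                    (\<forall>A. finite A \<and> card A = Suc d \<longrightarrow> \<not> shatters H A)"

definition emp_err :: "(nat \<Rightarrow> 'a \<times> bool) \<Rightarrow> nat set \<Rightarrow> ('a \<Rightarrow> bool) \<Rightarrow> nat" where
  "emp_err S I h = card {i \<in> I. h (fst (S i)) \<noteq> snd (S i)}"

definition even_split :: "nat \<Rightarrow> nat \<Rightarrow> (nat \<Rightarrow> nat set) \<Rightarrow> bool" where
  "even_split n K P \<longleftrightarrow>
     (\<forall>k<K. P k \<subseteq> {..<n}) \<and> (\<forall>k<K. \<forall>k'<K. k \<noteq> k' \<longrightarrow> P k \<inter> P k' = {}) \<and>
     (\<Union>k<K. P k) = {..<n} \<and> (\<forall>k<K. n div K \<le> card (P k) \<and> card (P k) \<le> n div K + 1)"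

definition laplace :: "real \<Rightarrow> real measure" where
  "laplace b = density lborel (\<lambda>x. ennreal (exp (- \<bar>x\<bar> / b) / (2 * b)))"

definition svt_lambda :: "nat \<Rightarrow> real \<Rightarrow> real \<Rightarrow> real" where
  "svt_lambda T \<epsilon> \<delta> =
     (sqrt (2 * real T * (\<epsilon> + ln (2 / \<delta>))) + sqrt (2 * real T * ln (2 / \<delta>))) / \<epsilon>"

definition svt_w :: "nat \<Rightarrow> nat \<Rightarrow> real \<Rightarrow> real \<Rightarrow> real" where
  "svt_w l T \<epsilon> \<delta> = 3 * svt_lambda T \<epsilon> \<delta> * ln (2 * (real l + real T) / \<delta>)"

definition votes :: "(nat \<Rightarrow> 'a \<Rightarrow> bool) \<Rightarrow> nat \<Rightarrow> 'a \<Rightarrow> real" where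
  "votes hs K x = (\<Sum>k<K. of_bool (hs k x))"

definition svt_dist :: "(nat \<Rightarrow> 'a \<Rightarrow> bool) \<Rightarrow> nat \<Rightarrow> 'a \<Rightarrow> real" where
  "svt_dist hs K x = max 0 (real_of_int \<lceil>\<bar>2 * votes hs K x - real K\<bar> / 2\<rceil> - 1)"

definition majority :: "(nat \<Rightarrow> 'a \<Rightarrow> bool) \<Rightarrow> nat \<Rightarrow> 'a \<Rightarrow> bool" where
  "majority hs K x \<longleftrightarrow> votes hs K x \<ge> real K / 2"

text \<open>The noise is pre-sampled: \<nu> c is the threshold noise Lap(\<lambda>) used while the counter
  equals c (c < T), and \<xi> j is the query noise Lap(2\<lambda>) of query j (j < m).
  svt_cnt ... j is the value of the counter c before query j (queries indexed from 0).
  Query j is processed iff the counter is still below T (for T \<ge> 1 this matches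
  "stop if c \<ge> T").\<close>
primrec svt_cnt :: "(nat \<Rightarrow> 'a \<Rightarrow> bool) \<Rightarrow> nat \<Rightarrow> nat \<Rightarrow> real \<Rightarrow> (nat \<Rightarrow> real) \<Rightarrow> (nat \<Rightarrow> real)
                      \<Rightarrow> (nat \<Rightarrow> 'a) \<Rightarrow> nat \<Rightarrow> nat" where
  "svt_cnt hs K T w \<nu> \<xi> x 0 = 0"
| "svt_cnt hs K T w \<nu> \<xi> x (Suc j) =
     (let c = svt_cnt hs K T w \<nu> \<xi> x j in
      if c < T \<and> \<not> (svt_dist hs K (x j) + \<xi> j > w + \<nu> c) then c + 1 else c)"

text \<open>Released answer to query j: Some label, or None for \<bottom> / not processed.\<close>
definition svt_out :: "(nat \<Rightarrow> 'a \<Rightarrow> bool) \<Rightarrow> nat \<Rightarrow> nat \<Rightarrow> real \<Rightarrow> (nat \<Rightarrow> real) \<Rightarrow> (nat \<Rightarrow> real)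
                      \<Rightarrow> (nat \<Rightarrow> 'a) \<Rightarrow> nat \<Rightarrow> bool option" where
  "svt_out hs K T w \<nu> \<xi> x j =
     (let c = svt_cnt hs K T w \<nu> \<xi> x j in
      if c < T \<and> svt_dist hs K (x j) + \<xi> j > w + \<nu> c then Some (majority hs K (x j)) else None)"

definition svt_noise :: "nat \<Rightarrow> nat \<Rightarrow> real \<Rightarrow> ((nat \<Rightarrow> real) \<times> (nat \<Rightarrow> real)) measure" where
  "svt_noise T m lam = (PiM {..<T} (\<lambda>_. laplace lam)) \<Otimes>\<^sub>M (PiM {..<m} (\<lambda>_. laplace (2 * lam)))"

end

theory Submission
  imports Defs "HOL-Real_Asymp.Real_Asymp"
begin

lemma lap_right:
  fixes b a :: real assumes b: "b > 0" and a: "0 \<le> a"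
  shows "(\<integral>\<^sup>+x. ennreal (exp (- \<bar>x\<bar> / b) / (2 * b)) * indicator {a..} x \<partial>lborel) = ennreal (exp (- a / b) / 2)"
proof -
  have "(\<integral>\<^sup>+x. ennreal (exp (- \<bar>x\<bar> / b) / (2 * b)) * indicator {a..} x \<partial>lborel) = ennreal (0 - (- exp (- a / b) / 2))"
  proof (rule nn_integral_FTC_atLeast)
    show "(\<lambda>x. exp (- \<bar>x\<bar> / b) / (2 * b)) \<in> borel_measurable borel" by measurable
    fix x assume "a \<le> x"
    then have "\<bar>x\<bar> = x" using a by auto
    show "DERIV (\<lambda>x. - exp (- x / b) / 2) x :> exp (- \<bar>x\<bar> / b) / (2 * b)"
      using b \<open>\<bar>x\<bar> = x\<close> by (auto intro!: derivative_eq_intros simp: field_simps)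
    show "0 \<le> exp (- \<bar>x\<bar> / b) / (2 * b)" using b by auto
  next
    show "((\<lambda>x. - exp (- x / b) / 2) \<longlongrightarrow> 0) at_top" using b by real_asymp
  qed
  then show ?thesis by simp
qed

lemma lap_left:
  fixes b a :: real assumes b: "b > 0" and a: "0 \<le> a"
  shows "(\<integral>\<^sup>+x. ennreal (exp (- \<bar>x\<bar> / b) / (2 * b)) * indicator {..-a} x \<partial>lborel) = ennreal (exp (- a / b) / 2)"
proof -
  have "(\<integral>\<^sup>+x. ennreal (exp (- \<bar>x\<bar> / b) / (2 * b)) * indicator {..-a} x \<partial>lborel)
     = (\<integral>\<^sup>+x. ennreal (exp (- \<bar>0 + (-1) * x\<bar> / b) / (2 * b)) * indicator {..-a} (0 + (-1) * x) \<partial>lborel)"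
    using nn_integral_real_affine[of "\<lambda>x. ennreal (exp (- \<bar>x\<bar> / b) / (2 * b)) * indicator {..-a} x" "-1" 0] by simp
  also have "\<dots> = (\<integral>\<^sup>+x. ennreal (exp (- \<bar>x\<bar> / b) / (2 * b)) * indicator {a..} x \<partial>lborel)"
    by (intro nn_integral_cong) (auto split: split_indicator)
  finally show ?thesis using lap_right[OF b a] by simp
qed

lemma lap_prob: fixes b :: real assumes b: "b > 0" shows "prob_space (laplace b)"
proof
  let ?f = "\<lambda>x. ennreal (exp (- \<bar>x\<bar> / b) / (2 * b))"
  have "emeasure (laplace b) (space (laplace b)) = (\<integral>\<^sup>+x. ?f x \<partial>lborel)"
    unfolding laplace_def by (simp add: emeasure_density)
  also have "\<dots> = (\<integral>\<^sup>+x. ?f x * indicator {..0} x + ?f x * indicator {0<..} x \<partial>lborel)"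
    by (intro nn_integral_cong) (auto split: split_indicator)
  also have "\<dots> = (\<integral>\<^sup>+x. ?f x * indicator {..0} x \<partial>lborel) + (\<integral>\<^sup>+x. ?f x * indicator {0<..} x \<partial>lborel)"
    by (rule nn_integral_add) auto
  also have "(\<integral>\<^sup>+x. ?f x * indicator {0<..} x \<partial>lborel) = (\<integral>\<^sup>+x. ?f x * indicator {0..} x \<partial>lborel)"
    by (intro nn_integral_cong_AE eventually_mono[OF AE_lborel_singleton[of 0]]) (auto split: split_indicator)
  also have "(\<integral>\<^sup>+x. ?f x * indicator {..0} x \<partial>lborel) = ennreal (1/2)"
    using lap_left[OF b, of 0] by simp
  also have "(\<integral>\<^sup>+x. ?f x * indicator {0..} x \<partial>lborel) = ennreal (1/2)"
    using lap_right[OF b, of 0] by simp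
  finally have X: "emeasure (laplace b) (space (laplace b)) = ennreal (1/2) + ennreal (1/2)" .
  show "emeasure (laplace b) (space (laplace b)) = 1"
    unfolding X by (subst ennreal_plus[symmetric]) auto
qed

lemma lap_le:
  fixes b t :: real assumes b: "b > 0" and t: "0 \<le> t"
  shows "measure (laplace b) {..t} \<ge> 1 - exp (- t / b) / 2"
proof -
  interpret prob_space "laplace b" by (rule lap_prob[OF b])
  have sl: "sets (laplace b) = sets borel" unfolding laplace_def by simp
  have "emeasure (laplace b) {t..} = ennreal (exp (- t / b) / 2)"
    unfolding laplace_def using lap_right[OF b t] by (simp add: emeasure_density)
  then have e: "measure (laplace b) {t..} = exp (- t / b) / 2"
    by (simp add: measure_def)
  have "measure (laplace b) {..t} = 1 - measure (laplace b) {t<..}"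
  proof -
    have "{t<..} = space (laplace b) - {..t}" using sl by (auto simp: space_borel dest: sets_eq_imp_space_eq)
    then show ?thesis using prob_compl[of "{..t}"] sl by simp
  qed
  moreover have "measure (laplace b) {t<..} \<le> measure (laplace b) {t..}"
    by (rule finite_measure_mono) (auto simp: sl)
  ultimately show ?thesis using e by simp
qed

lemma lap_ge:
  fixes b t :: real assumes b: "b > 0" and t: "0 \<le> t"
  shows "measure (laplace b) {-t..} \<ge> 1 - exp (- t / b) / 2"
proof -
  interpret prob_space "laplace b" by (rule lap_prob[OF b])
  have sl: "sets (laplace b) = sets borel" unfolding laplace_def by simp
  have "emeasure (laplace b) {..-t} = ennreal (exp (- t / b) / 2)"
    unfolding laplace_def using lap_left[OF b t] by (simp add: emeasure_density)
  then have e: "measure (laplace b) {..-t} = exp (- t / b) / 2"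
    by (simp add: measure_def)
  have "measure (laplace b) {-t..} = 1 - measure (laplace b) {..<-t}"
  proof -
    have "{..<-t} = space (laplace b) - {-t..}" using sl by (auto simp: space_borel dest: sets_eq_imp_space_eq)
    then show ?thesis using prob_compl[of "{-t..}"] sl by simp
  qed
  moreover have "measure (laplace b) {..<-t} \<le> measure (laplace b) {..-t}"
    by (rule finite_measure_mono) (auto simp: sl)
  ultimately show ?thesis using e by simp
qed

lemma measure_PiM_lap:
  fixes b :: real and A :: "nat \<Rightarrow> real set" assumes b: "b > 0" and A: "\<And>i. A i \<in> sets borel"
  shows "measure (PiM {..<n} (\<lambda>_. laplace b)) (PiE {..<n} A) = (\<Prod>i<n. measure (laplace b) (A i))"
proof -
  interpret L: prob_space "laplace b" by (rule lap_prob[OF b])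
  interpret product_prob_space "\<lambda>_. laplace b" unfolding product_prob_space_def product_prob_space_axioms_def
    using lap_prob[OF b] by (auto simp: product_sigma_finite_def prob_space_imp_sigma_finite)
  have sl: "sets (laplace b) = sets borel" unfolding laplace_def by simp
  have "emeasure (PiM {..<n} (\<lambda>_. laplace b)) (PiE {..<n} A) = (\<Prod>i<n. emeasure (laplace b) (A i))"
    by (rule emeasure_PiM) (auto simp: sl A)
  also have "\<dots> = (\<Prod>i<n. ennreal (measure (laplace b) (A i)))"
    using L.emeasure_eq_measure by simp
  also have "\<dots> = ennreal (\<Prod>i<n. measure (laplace b) (A i))"
    by (rule prod_ennreal) auto
  finally show ?thesis by (simp add: measure_def prod_nonneg)
qed

lemma pow_bern: fixes a :: real assumes "0 \<le> a" "a \<le> 1" shows "(1 - a) ^ n \<ge> 1 - real n * a"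
  using Bernoulli_inequality[of "-a" n] assms by simp

lemma expl: fixes t l :: real assumes "0 \<le> t" "0 < l" shows "exp (- t / l) \<le> 1" "exp (- (t / l)) \<le> 1"
  using assms by (simp_all add: divide_nonneg_pos)

lemma noise_bound:
  fixes lam t1 t2 \<beta> :: real and Good :: "((nat \<Rightarrow> real) \<times> (nat \<Rightarrow> real)) set"
  assumes lam: "lam > 0" and t1: "t1 \<ge> 0" and t2: "t2 \<ge> 0"
    and Gs: "Good \<in> sets (svt_noise T m lam)"
    and sub: "(PiE {..<T} (\<lambda>_. {..t1})) \<times> (PiE {..<m} (\<lambda>_. {-t2..})) \<subseteq> Good"
    and e1: "real T * exp (- t1 / lam) \<le> \<beta>" and e2: "real m * exp (- t2 / (2 * lam)) \<le> \<beta>"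
    and \<beta>: "\<beta> \<le> 1"
  shows "measure (svt_noise T m lam) Good \<ge> 1 - \<beta>"
proof -
  let ?M1 = "PiM {..<T} (\<lambda>_. laplace lam)" and ?M2 = "PiM {..<m} (\<lambda>_. laplace (2 * lam))"
  have lam2: "2 * lam > 0" using lam by simp
  interpret P1: prob_space ?M1 by (rule prob_space_PiM) (rule lap_prob[OF lam])
  interpret P2: prob_space ?M2 by (rule prob_space_PiM) (rule lap_prob[OF lam2])
  interpret P: pair_prob_space ?M1 ?M2 by unfold_locales
  have N: "svt_noise T m lam = ?M1 \<Otimes>\<^sub>M ?M2" unfolding svt_noise_def by simp
  have A1: "PiE {..<T} (\<lambda>_. {..t1}) \<in> sets ?M1" by (auto intro!: sets_PiM_I_finite simp: laplace_def)
  have A2: "PiE {..<m} (\<lambda>_. {-t2..}) \<in> sets ?M2" by (auto intro!: sets_PiM_I_finite simp: laplace_def)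
  have m1: "measure ?M1 (PiE {..<T} (\<lambda>_. {..t1})) \<ge> 1 - \<beta>/2"
  proof -
    have "measure ?M1 (PiE {..<T} (\<lambda>_. {..t1})) = (\<Prod>i<T. measure (laplace lam) {..t1})"
      by (rule measure_PiM_lap[OF lam]) auto
    also have "\<dots> = measure (laplace lam) {..t1} ^ T" by simp
    also have "\<dots> \<ge> (1 - exp (- t1 / lam) / 2) ^ T"
      by (rule power_mono[OF lap_le[OF lam t1]]) (use expl[OF t1 lam] in \<open>auto simp del: exp_le_one_iff\<close>)
    moreover have "(1 - exp (- t1 / lam) / 2) ^ T \<ge> 1 - real T * (exp (- t1 / lam) / 2)"
      by (rule pow_bern) (use expl[OF t1 lam] in \<open>auto simp del: exp_le_one_iff\<close>)
    ultimately show ?thesis using e1 by simp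
  qed
  have m2: "measure ?M2 (PiE {..<m} (\<lambda>_. {-t2..})) \<ge> 1 - \<beta>/2"
  proof -
    have "measure ?M2 (PiE {..<m} (\<lambda>_. {-t2..})) = (\<Prod>i<m. measure (laplace (2*lam)) {-t2..})"
      by (rule measure_PiM_lap[OF lam2]) auto
    also have "\<dots> = measure (laplace (2*lam)) {-t2..} ^ m" by simp
    also have "\<dots> \<ge> (1 - exp (- t2 / (2*lam)) / 2) ^ m"
      by (rule power_mono[OF lap_ge[OF lam2 t2]]) (use expl[OF t2 lam2] in \<open>auto simp del: exp_le_one_iff\<close>)
    moreover have "(1 - exp (- t2 / (2*lam)) / 2) ^ m \<ge> 1 - real m * (exp (- t2 / (2*lam)) / 2)"
      by (rule pow_bern) (use expl[OF t2 lam2] in \<open>auto simp del: exp_le_one_iff\<close>)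
    ultimately show ?thesis using e2 by simp
  qed
  have "measure (?M1 \<Otimes>\<^sub>M ?M2) (PiE {..<T} (\<lambda>_. {..t1}) \<times> PiE {..<m} (\<lambda>_. {-t2..}))
      = measure ?M1 (PiE {..<T} (\<lambda>_. {..t1})) * measure ?M2 (PiE {..<m} (\<lambda>_. {-t2..}))"
    using P2.emeasure_pair_measure_Times[OF A1 A2] by (simp add: measure_def enn2real_mult)
  also have "\<dots> \<ge> (1 - \<beta>/2) * (1 - \<beta>/2)"
    by (rule mult_mono[OF m1 m2]) (use \<beta> in auto)
  moreover have "(1 - \<beta>/2) * (1 - \<beta>/2) \<ge> 1 - \<beta>" by (simp add: algebra_simps)
  moreover have "measure (?M1 \<Otimes>\<^sub>M ?M2) (PiE {..<T} (\<lambda>_. {..t1}) \<times> PiE {..<m} (\<lambda>_. {-t2..})) \<le> measure (?M1 \<Otimes>\<^sub>M ?M2) Good"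
    by (rule P.finite_measure_mono[OF sub]) (use Gs N in simp)
  ultimately show ?thesis using N by simp
qed

lemma ln2_ge: "ln (2::real) \<ge> 1/2"
proof -
  have "exp (1/2::real) * exp (1/2) = exp 1" by (simp flip: exp_add)
  then have "exp (1/2::real) * exp (1/2) < 2 * 2" using exp_le by simp
  then have "exp (1/2::real) < 2"
  proof (rule contrapos_pp)
    assume "\<not> exp (1/2::real) < 2"
    then have "2 * 2 \<le> exp (1/2::real) * exp (1/2)" by (intro mult_mono) auto
    then show "\<not> exp (1/2::real) * exp (1/2) < 2 * 2" by simp
  qed
  then have "ln (exp (1/2::real)) < ln 2" by (subst ln_less_cancel_iff) auto
  then show ?thesis by simp
qed

lemma card_sum: "real (card {k. k < (n::nat) \<and> P k}) = (\<Sum>k<n. of_bool (P k))"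
proof -
  have "(\<Sum>k<n. (of_bool (P k)::real)) = real (card ({..<n} \<inter> {k. P k}))" by (rule sum_of_bool_eq) auto
  moreover have "{..<n} \<inter> {k. P k} = {k. k < n \<and> P k}" by auto
  ultimately show ?thesis by simp
qed

lemma votes_card: "votes hs K y = real (card {k. k < K \<and> hs k y})"
  unfolding votes_def card_sum by simp

lemma card_split: "card {k. k < K \<and> P k} + card {k. k < K \<and> \<not> P k} = K"
proof -
  have "card {k. k < K \<and> P k} + card {k. k < K \<and> \<not> P k} = card ({k. k < K \<and> P k} \<union> {k. k < K \<and> \<not> P k})"
    by (rule card_Un_disjoint[symmetric]) auto
  also have "{k. k < K \<and> P k} \<union> {k. k < K \<and> \<not> P k} = {..<K}" by auto
  finally show ?thesis by simp
qed

lemma good_point: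
  assumes bad: "\<not> real K \<le> 3 * real (card {k. k < K \<and> hs k y \<noteq> hy})"
  shows "svt_dist hs K y > real K / 6 - 1" and "majority hs K y = hy"
proof -
  define W where "W = card {k. k < K \<and> hs k y \<noteq> hy}"
  have W3: "3 * real W < real K" using bad W_def by simp
  have v: "votes hs K y = (if hy then real K - real W else real W)"
  proof (cases hy)
    case True
    have "card {k. k < K \<and> hs k y} + W = K" unfolding W_def using card_split[of K "\<lambda>k. hs k y"] True by simp
    then show ?thesis using True by (simp add: votes_card algebra_simps flip: of_nat_add)
  next
    case False
    then show ?thesis by (simp add: votes_card W_def)
  qed
  have a: "\<bar>2 * votes hs K y - real K\<bar> = real K - 2 * real W" using v W3 by auto
  have "real_of_int \<lceil>\<bar>2 * votes hs K y - real K\<bar> / 2\<rceil> \<ge> (real K - 2 * real W) / 2"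
    unfolding a by linarith
  moreover have "(real K - 2 * real W) / 2 > real K / 6" using W3 by simp
  ultimately have "real_of_int \<lceil>\<bar>2 * votes hs K y - real K\<bar> / 2\<rceil> - 1 > real K / 6 - 1" by linarith
  then show "svt_dist hs K y > real K / 6 - 1" unfolding svt_dist_def by (rule less_le_trans) simp
  show "majority hs K y = hy" unfolding majority_def using v W3 by auto
qed

lemma double_count:
  fixes E :: real and m :: nat and x :: "nat \<Rightarrow> 'a"
  assumes K: "K > 0" and E: "\<And>k. k < K \<Longrightarrow> real (card {j. j < m \<and> hs k (x j) \<noteq> hstar (x j)}) \<le> E"
  shows "real (card {j. j < m \<and> real K \<le> 3 * real (card {k. k < K \<and> hs k (x j) \<noteq> hstar (x j)})}) \<le> 3 * E"
proof -
  let ?w = "\<lambda>k j. (of_bool (hs k (x j) \<noteq> hstar (x j)) :: real)"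
  let ?W = "\<lambda>j. real (card {k. k < K \<and> hs k (x j) \<noteq> hstar (x j)})"
  let ?b = "\<lambda>j. real K \<le> 3 * ?W j"
  have "real K * real (card {j. j < m \<and> ?b j}) = (\<Sum>j<m. real K * of_bool (?b j))"
    by (subst card_sum[of m]) (rule sum_distrib_left)
  also have "\<dots> \<le> (\<Sum>j<m. 3 * ?W j)"
    by (rule sum_mono) auto
  also have "\<dots> = 3 * (\<Sum>j<m. \<Sum>k<K. ?w k j)" by (simp add: card_sum sum_distrib_left)
  also have "(\<Sum>j<m. \<Sum>k<K. ?w k j) = (\<Sum>k<K. \<Sum>j<m. ?w k j)" by (rule sum.swap)
  also have "\<dots> \<le> (\<Sum>k<K. E)"
    by (rule sum_mono) (use E in \<open>simp add: card_sum[symmetric]\<close>)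
  also have "\<dots> = real K * E" by simp
  finally have "real K * real (card {j. j < m \<and> ?b j}) \<le> real K * (3 * E)" by simp
  then show ?thesis using K by simp
qed

lemma cnt_le:
  assumes nu: "\<And>c. c < T \<Longrightarrow> \<nu> c \<le> t1" and xi: "\<And>j. j < m \<Longrightarrow> \<xi> j \<ge> - t2"
    and hw: "w + t1 + t2 \<le> real K / 6 - 1"
  shows "j \<le> m \<Longrightarrow> svt_cnt hs K T w \<nu> \<xi> x j \<le> card {i. i < j \<and> real K \<le> 3 * real (card {k. k < K \<and> hs k (x i) \<noteq> hstar (x i)})}"
proof (induction j)
  case 0 then show ?case by simp
next
  case (Suc j)
  let ?b = "\<lambda>i. real K \<le> 3 * real (card {k. k < K \<and> hs k (x i) \<noteq> hstar (x i)})"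
  let ?c = "svt_cnt hs K T w \<nu> \<xi> x j"
  have IH: "?c \<le> card {i. i < j \<and> ?b i}" using Suc by simp
  have fin: "finite {i. i < j \<and> ?b i}" by simp
  show ?case
  proof (cases "?b j")
    case True
    have "{i. i < Suc j \<and> ?b i} = insert j {i. i < j \<and> ?b i}" using True by auto
    then have "card {i. i < Suc j \<and> ?b i} = Suc (card {i. i < j \<and> ?b i})" using fin by simp
    then show ?thesis using IH by (simp add: Let_def)
  next
    case False
    have "{i. i < Suc j \<and> ?b i} = {i. i < j \<and> ?b i}" using False by (auto simp: less_Suc_eq)
    moreover have nc: "\<not> (?c < T \<and> \<not> (svt_dist hs K (x j) + \<xi> j > w + \<nu> ?c))"
    proof
      assume h: "?c < T \<and> \<not> (svt_dist hs K (x j) + \<xi> j > w + \<nu> ?c)"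
      have "svt_dist hs K (x j) > real K / 6 - 1" using good_point(1)[of K hs "x j" "hstar (x j)"] False .
      moreover have "\<nu> ?c \<le> t1" using nu h by simp
      moreover have "\<xi> j \<ge> - t2" using xi Suc.prems by simp
      ultimately show False using h hw by linarith
    qed
    moreover have "svt_cnt hs K T w \<nu> \<xi> x (Suc j) = ?c"
      unfolding svt_cnt.simps Let_def using nc by (rule if_not_P)
    ultimately show ?thesis using IH by simp
  qed
qed

lemma det_main:
  assumes nu: "\<And>c. c < T \<Longrightarrow> \<nu> c \<le> t1" and xi: "\<And>j. j < m \<Longrightarrow> \<xi> j \<ge> - t2"
    and hw: "w + t1 + t2 \<le> real K / 6 - 1"
    and B: "card {j. j < m \<and> real K \<le> 3 * real (card {k. k < K \<and> hs k (x j) \<noteq> hstar (x j)})} < T"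
  shows "svt_cnt hs K T w \<nu> \<xi> x m < T"
    and "card {j. j < m \<and> svt_out hs K T w \<nu> \<xi> x j \<noteq> Some (hstar (x j))} < T"
proof -
  let ?b = "\<lambda>i. real K \<le> 3 * real (card {k. k < K \<and> hs k (x i) \<noteq> hstar (x i)})"
  have mono: "card {i. i < j \<and> ?b i} \<le> card {i. i < m \<and> ?b i}" if "j \<le> m" for j
    by (rule card_mono) (use that in auto)
  have cl: "svt_cnt hs K T w \<nu> \<xi> x j \<le> card {i. i < j \<and> ?b i}" if "j \<le> m" for j
    apply (rule cnt_le) using nu xi hw that by auto
  show "svt_cnt hs K T w \<nu> \<xi> x m < T" using cl[of m] B by simp
  have sub: "{j. j < m \<and> svt_out hs K T w \<nu> \<xi> x j \<noteq> Some (hstar (x j))} \<subseteq> {i. i < m \<and> ?b i}"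
  proof safe
    fix j assume j: "j < m" and ne: "svt_out hs K T w \<nu> \<xi> x j \<noteq> Some (hstar (x j))"
    show "?b j"
    proof (rule ccontr)
      assume nb: "\<not> ?b j"
      let ?c = "svt_cnt hs K T w \<nu> \<xi> x j"
      have "?c < T" using cl[of j] mono[of j] j B by simp
      moreover have "svt_dist hs K (x j) > real K / 6 - 1" using good_point(1)[of K hs "x j" "hstar (x j)"] nb .
      moreover have "\<nu> ?c \<le> t1" using nu \<open>?c < T\<close> by simp
      moreover have "\<xi> j \<ge> - t2" using xi j by simp
      ultimately have "?c < T \<and> svt_dist hs K (x j) + \<xi> j > w + \<nu> ?c" using hw by linarith
      then have "svt_out hs K T w \<nu> \<xi> x j = Some (majority hs K (x j))" unfolding svt_out_def by (simp add: Let_def)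
      then show False using ne good_point(2)[of K hs "x j" "hstar (x j)"] nb by simp
    qed
  qed
  show "card {j. j < m \<and> svt_out hs K T w \<nu> \<xi> x j \<noteq> Some (hstar (x j))} < T"
  proof -
    have "card {j. j < m \<and> svt_out hs K T w \<nu> \<xi> x j \<noteq> Some (hstar (x j))} \<le> card {i. i < m \<and> ?b i}"
      by (rule card_mono[OF _ sub]) simp
    then show ?thesis using B by linarith
  qed
qed

lemma worst_r:
  "(\<forall>r :: nat \<Rightarrow> bool. card {j. j < m \<and> (case out j of Some b \<Rightarrow> b | None \<Rightarrow> r j) \<noteq> h j} \<le> T)
   \<longleftrightarrow> card {j. j < m \<and> out j \<noteq> Some (h j)} \<le> T"
proof
  assume a: "\<forall>r :: nat \<Rightarrow> bool. card {j. j < m \<and> (case out j of Some b \<Rightarrow> b | None \<Rightarrow> r j) \<noteq> h j} \<le> T"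
  have "card {j. j < m \<and> (case out j of Some b \<Rightarrow> b | None \<Rightarrow> \<not> h j) \<noteq> h j} \<le> T" using a[rule_format, of "\<lambda>j. \<not> h j"] by simp
  moreover have "{j. j < m \<and> (case out j of Some b \<Rightarrow> b | None \<Rightarrow> \<not> h j) \<noteq> h j} = {j. j < m \<and> out j \<noteq> Some (h j)}"
    by (auto split: option.splits)
  ultimately show "card {j. j < m \<and> out j \<noteq> Some (h j)} \<le> T" by simp
next
  assume a: "card {j. j < m \<and> out j \<noteq> Some (h j)} \<le> T"
  show "\<forall>r :: nat \<Rightarrow> bool. card {j. j < m \<and> (case out j of Some b \<Rightarrow> b | None \<Rightarrow> r j) \<noteq> h j} \<le> T"
  proof
    fix r :: "nat \<Rightarrow> bool"
    have "{j. j < m \<and> (case out j of Some b \<Rightarrow> b | None \<Rightarrow> r j) \<noteq> h j} \<subseteq> {j. j < m \<and> out j \<noteq> Some (h j)}"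
      by (auto split: option.splits)
    then have "card {j. j < m \<and> (case out j of Some b \<Rightarrow> b | None \<Rightarrow> r j) \<noteq> h j} \<le> card {j. j < m \<and> out j \<noteq> Some (h j)}"
      by (intro card_mono) auto
    then show "card {j. j < m \<and> (case out j of Some b \<Rightarrow> b | None \<Rightarrow> r j) \<noteq> h j} \<le> T"
      using a by linarith
  qed
qed

lemma sets_laplace: "sets (laplace b) = sets borel" unfolding laplace_def by simp

context fixes T m :: nat and lam :: real begin

lemma comp1: "c < T \<Longrightarrow> (\<lambda>\<omega>. fst \<omega> c) \<in> borel_measurable (svt_noise T m lam)"
proof -
  assume c: "c < T"
  have "(\<lambda>\<omega>. fst \<omega> c) \<in> measurable (svt_noise T m lam) (laplace lam)"
    unfolding svt_noise_def
    by (rule measurable_compose[OF measurable_fst measurable_component_singleton]) (use c in simp)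
  then show ?thesis by (simp add: measurable_cong_sets[OF refl sets_laplace])
qed

lemma comp2: "j < m \<Longrightarrow> (\<lambda>\<omega>. snd \<omega> j) \<in> borel_measurable (svt_noise T m lam)"
proof -
  assume j: "j < m"
  have "(\<lambda>\<omega>. snd \<omega> j) \<in> measurable (svt_noise T m lam) (laplace (2 * lam))"
    unfolding svt_noise_def
    by (rule measurable_compose[OF measurable_snd measurable_component_singleton]) (use j in simp)
  then show ?thesis by (simp add: measurable_cong_sets[OF refl sets_laplace])
qed

lemma step_pred: fixes a w :: real shows "j < m \<Longrightarrow> Measurable.pred (svt_noise T m lam) (\<lambda>\<omega>. i < T \<and> (a + snd \<omega> j > w + fst \<omega> i))"
proof (cases "i < T")
  case True
  assume j: "j < m"
  note [measurable] = comp1[OF True] comp2[OF j]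
  have "{\<omega> \<in> space (svt_noise T m lam). w + fst \<omega> i < a + snd \<omega> j} \<in> sets (svt_noise T m lam)"
    by (intro borel_measurable_less borel_measurable_add comp1[OF True] comp2[OF j] borel_measurable_const)
  then have "Measurable.pred (svt_noise T m lam) (\<lambda>\<omega>. a + snd \<omega> j > w + fst \<omega> i)" unfolding Measurable.pred_def .
  then show ?thesis using True by simp
qed simp

lemma cnt_meas: "j \<le> m \<Longrightarrow> (\<lambda>\<omega>. svt_cnt hs K T w (fst \<omega>) (snd \<omega>) x j) \<in> measurable (svt_noise T m lam) (count_space UNIV)"
proof (induction j)
  case 0 then show ?case by simp
next
  case (Suc j)
  have j: "j < m" using Suc by simp
  let ?f = "\<lambda>i \<omega>. if i < T \<and> \<not> (svt_dist hs K (x j) + snd \<omega> j > w + fst \<omega> i) then i + 1 else i"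
  have "(\<lambda>\<omega>. ?f (svt_cnt hs K T w (fst \<omega>) (snd \<omega>) x j) \<omega>) \<in> measurable (svt_noise T m lam) (count_space UNIV)"
  proof (rule measurable_compose_countable'[where I=UNIV and f="?f"])
    fix i :: nat
    have p1: "Measurable.pred (svt_noise T m lam) (\<lambda>\<omega>. i < T \<and> (svt_dist hs K (x j) + snd \<omega> j > w + fst \<omega> i))"
      by (rule step_pred[OF j])
    have "Measurable.pred (svt_noise T m lam) (\<lambda>\<omega>. i < T \<and> \<not> (svt_dist hs K (x j) + snd \<omega> j > w + fst \<omega> i))"
    proof (cases "i < T")
      case True
      then show ?thesis using pred_intros_logic(2)[OF p1] by simp
    qed simp
    then have S: "{\<omega> \<in> space (svt_noise T m lam). i < T \<and> \<not> (svt_dist hs K (x j) + snd \<omega> j > w + fst \<omega> i)} \<in> sets (svt_noise T m lam)"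
      unfolding Measurable.pred_def .
    show "?f i \<in> measurable (svt_noise T m lam) (count_space UNIV)"
      by (rule measurable_If[OF _ _ S]) simp_all
  next
    show "(\<lambda>\<omega>. svt_cnt hs K T w (fst \<omega>) (snd \<omega>) x j) \<in> measurable (svt_noise T m lam) (count_space UNIV)"
      using Suc by simp
  qed simp
  then show ?case by (simp add: Let_def)
qed

lemma out_meas: "j < m \<Longrightarrow> (\<lambda>\<omega>. svt_out hs K T w (fst \<omega>) (snd \<omega>) x j) \<in> measurable (svt_noise T m lam) (count_space UNIV)"
proof -
  assume j: "j < m"
  let ?f = "\<lambda>i \<omega>. if i < T \<and> svt_dist hs K (x j) + snd \<omega> j > w + fst \<omega> i then Some (majority hs K (x j)) else None"
  have "(\<lambda>\<omega>. ?f (svt_cnt hs K T w (fst \<omega>) (snd \<omega>) x j) \<omega>) \<in> measurable (svt_noise T m lam) (count_space UNIV)"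
  proof (rule measurable_compose_countable'[where I=UNIV and f="?f"])
    fix i :: nat
    have S: "{\<omega> \<in> space (svt_noise T m lam). i < T \<and> (svt_dist hs K (x j) + snd \<omega> j > w + fst \<omega> i)} \<in> sets (svt_noise T m lam)"
      using step_pred[OF j] unfolding Measurable.pred_def .
    show "?f i \<in> measurable (svt_noise T m lam) (count_space UNIV)"
      by (rule measurable_If[OF _ _ S]) simp_all
  next
    show "(\<lambda>\<omega>. svt_cnt hs K T w (fst \<omega>) (snd \<omega>) x j) \<in> measurable (svt_noise T m lam) (count_space UNIV)"
      using j by (intro cnt_meas) simp
  qed simp
  then show ?thesis by (simp add: svt_out_def Let_def)
qed

lemma good_meas:
  "{\<omega> \<in> space (svt_noise T m lam). svt_cnt hs K T w (fst \<omega>) (snd \<omega>) x m < T \<and>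
      card {j. j < m \<and> svt_out hs K T w (fst \<omega>) (snd \<omega>) x j \<noteq> Some (hstar (x j))} \<le> T}
   \<in> sets (svt_noise T m lam)"
proof -
  let ?N = "svt_noise T m lam"
  have p1: "Measurable.pred ?N (\<lambda>\<omega>. svt_cnt hs K T w (fst \<omega>) (snd \<omega>) x m \<in> {..<T})"
    by (rule pred_sets2[OF _ cnt_meas]) auto
  have cm: "(\<lambda>\<omega>. card {j. j < m \<and> svt_out hs K T w (fst \<omega>) (snd \<omega>) x j \<noteq> Some (hstar (x j))}) \<in> measurable ?N (count_space UNIV)"
  proof (rule measurable_card)
    fix i
    show "{\<omega> \<in> space ?N. i \<in> {j. j < m \<and> svt_out hs K T w (fst \<omega>) (snd \<omega>) x j \<noteq> Some (hstar (x j))}} \<in> sets ?N"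
    proof (cases "i < m")
      case True
      have "Measurable.pred ?N (\<lambda>\<omega>. svt_out hs K T w (fst \<omega>) (snd \<omega>) x i \<in> - {Some (hstar (x i))})"
        by (rule pred_sets2[OF _ out_meas[OF True]]) auto
      then show ?thesis using True by (simp add: Measurable.pred_def)
    qed simp
  qed
  have p2: "Measurable.pred ?N (\<lambda>\<omega>. card {j. j < m \<and> svt_out hs K T w (fst \<omega>) (snd \<omega>) x j \<noteq> Some (hstar (x j))} \<in> {..T})"
    by (rule pred_sets2[OF _ cm]) auto
  have "Measurable.pred ?N (\<lambda>\<omega>. svt_cnt hs K T w (fst \<omega>) (snd \<omega>) x m \<in> {..<T} \<and>
      card {j. j < m \<and> svt_out hs K T w (fst \<omega>) (snd \<omega>) x j \<noteq> Some (hstar (x j))} \<in> {..T})"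
    using p1 p2 by (rule pred_intros_logic(3))
  then show ?thesis by (simp add: Measurable.pred_def)
qed

end

lemma sqrt_9: "sqrt (9 * z) = 3 * sqrt (z::real)"
  by (simp add: real_sqrt_mult)

lemma lam_bound:
  assumes T: "real T \<ge> 1" and e: "0 < \<epsilon>" "\<epsilon> \<le> 1" and d: "0 < \<delta>" "\<delta> \<le> 1/2"
  shows "svt_lambda T \<epsilon> \<delta> \<le> 6 * (sqrt (real T * ln (1 / \<delta>)) / \<epsilon>)" and "svt_lambda T \<epsilon> \<delta> > 0"
proof -
  define l where "l = ln (1 / \<delta>)"
  have "ln 2 \<le> l" unfolding l_def using d by (subst ln_le_cancel_iff) (auto simp: field_simps)
  then have l2: "l \<ge> 1/2" using ln2_ge by linarith
  have "ln (2 / \<delta>) = ln 2 + l" unfolding l_def using d by (simp add: ln_div)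
  then have a: "ln (2 / \<delta>) \<le> 2 * l" and a0: "ln (2 / \<delta>) > 0" using \<open>ln 2 \<le> l\<close> l2 ln2_ge by auto
  have b: "\<epsilon> + ln (2 / \<delta>) \<le> 9/2 * l" using a e l2 by linarith
  have s1: "sqrt (2 * real T * (\<epsilon> + ln (2 / \<delta>))) \<le> 3 * sqrt (real T * l)"
  proof -
    have "2 * real T * (\<epsilon> + ln (2 / \<delta>)) \<le> 2 * real T * (9/2 * l)" by (rule mult_left_mono[OF b]) (use T in simp)
    also have "\<dots> = 9 * (real T * l)" by simp
    finally have "2 * real T * (\<epsilon> + ln (2 / \<delta>)) \<le> 9 * (real T * l)" .
    then have "sqrt (2 * real T * (\<epsilon> + ln (2 / \<delta>))) \<le> sqrt (9 * (real T * l))" by (rule real_sqrt_le_mono)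
    then show ?thesis by (simp add: sqrt_9)
  qed
  have s2: "sqrt (2 * real T * ln (2 / \<delta>)) \<le> 3 * sqrt (real T * l)"
  proof -
    have "2 * real T * ln (2 / \<delta>) \<le> 2 * real T * (2 * l)" by (rule mult_left_mono[OF a]) (use T in simp)
    also have "\<dots> \<le> 9 * (real T * l)" using T l2 by simp
    finally have "2 * real T * ln (2 / \<delta>) \<le> 9 * (real T * l)" .
    then have "sqrt (2 * real T * ln (2 / \<delta>)) \<le> sqrt (9 * (real T * l))" by (rule real_sqrt_le_mono)
    then show ?thesis by (simp add: sqrt_9)
  qed
  show "svt_lambda T \<epsilon> \<delta> \<le> 6 * (sqrt (real T * ln (1 / \<delta>)) / \<epsilon>)"
  proof -
    have "svt_lambda T \<epsilon> \<delta> \<le> (6 * sqrt (real T * l)) / \<epsilon>"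
      unfolding svt_lambda_def l_def[symmetric] by (rule divide_right_mono) (use s1 s2 e in linarith)+
    then show ?thesis unfolding l_def by simp
  qed
  have "sqrt (2 * real T * ln (2 / \<delta>)) > 0" using a0 T by simp
  moreover have "sqrt (2 * real T * (\<epsilon> + ln (2 / \<delta>))) \<ge> 0" using a0 T e by simp
  ultimately show "svt_lambda T \<epsilon> \<delta> > 0" unfolding svt_lambda_def using e
    by (intro divide_pos_pos) linarith+
qed

lemma thr:
  fixes \<epsilon> \<delta> \<beta> :: real and m T K :: nat
  assumes m: "1 \<le> m" and T: "1 \<le> T" and e: "0 < \<epsilon>" "\<epsilon> \<le> 1" and d: "0 < \<delta>" "\<delta> \<le> 1/2"
    and b: "0 < \<beta>" "\<beta> < 1"
    and K: "real K \<ge> 500 * ln (real m * real T / min \<delta> \<beta>) * (sqrt (real T * ln (1 / \<delta>)) / \<epsilon>)"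
  shows "svt_w m T \<epsilon> \<delta> + svt_lambda T \<epsilon> \<delta> * ln (real T / \<beta>) + 2 * svt_lambda T \<epsilon> \<delta> * ln (real m / \<beta>)
           \<le> real K / 6 - 1"
    and "K > 0"
    and "ln (real m * real T / min \<delta> \<beta>) * (sqrt (real T * ln (1 / \<delta>)) / \<epsilon>) \<ge> 1/4"
    and "ln (real m * real T / min \<delta> \<beta>) \<ge> 0"
proof -
  define mu where "mu = min \<delta> \<beta>"
  define M where "M = real m * real T / mu"
  define Lam where "Lam = ln M"
  define S where "S = sqrt (real T * ln (1 / \<delta>)) / \<epsilon>"
  define lam where "lam = svt_lambda T \<epsilon> \<delta>"
  have mu: "0 < mu" "mu \<le> 1/2" "mu \<le> \<delta>" "mu \<le> \<beta>" unfolding mu_def using d b by auto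
  have mT: "real m * real T \<ge> 1" using mult_mono[of 1 "real m" 1 "real T"] m T by simp
  have M2: "M \<ge> 2" unfolding M_def using mu mT by (simp add: field_simps)
  have "ln 2 \<le> ln M" using M2 by (subst ln_le_cancel_iff) auto
  then have Lam: "Lam \<ge> 1/2" unfolding Lam_def using ln2_ge by linarith
  have l1: "ln (2 * (real m + real T) / \<delta>) \<le> 3 * Lam"
  proof -
    have "2 * (real m + real T) \<le> 4 * (real m * real T)"
    proof -
      have "real m \<le> real m * real T" "real T \<le> real m * real T" using m T by auto
      then show ?thesis by (simp add: algebra_simps)
    qed
    then have "2 * (real m + real T) / \<delta> \<le> 4 * (real m * real T) / mu"
      using mu d by (intro frac_le) auto
    also have "\<dots> = 4 * M" unfolding M_def by simp
    also have "\<dots> \<le> M ^ 3"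
    proof -
      have "4 \<le> M * M" using M2 mult_mono[OF M2 M2] by simp
      then have "4 * M \<le> (M * M) * M" using M2 by (intro mult_right_mono) auto
      then show ?thesis by (simp add: power3_eq_cube)
    qed
    finally have "ln (2 * (real m + real T) / \<delta>) \<le> ln (M ^ 3)"
      using d m T M2 by (subst ln_le_cancel_iff) auto
    then show ?thesis unfolding Lam_def using M2 by (simp add: ln_realpow)
  qed
  have l2: "ln (real T / \<beta>) \<le> Lam" "0 \<le> ln (real T / \<beta>)"
  proof -
    have "real T / \<beta> \<le> M" unfolding M_def using mu b m T
      by (intro frac_le) (auto simp: mult_le_cancel_right1)
    then show "ln (real T / \<beta>) \<le> Lam" unfolding Lam_def using b T M2 by (subst ln_le_cancel_iff) auto
    show "0 \<le> ln (real T / \<beta>)" using b T by simp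
  qed
  have l3: "ln (real m / \<beta>) \<le> Lam" "0 \<le> ln (real m / \<beta>)"
  proof -
    have "real m / \<beta> \<le> M" unfolding M_def using mu b m T
      by (intro frac_le) (auto simp: mult_le_cancel_left1)
    then show "ln (real m / \<beta>) \<le> Lam" unfolding Lam_def using b m M2 by (subst ln_le_cancel_iff) auto
    show "0 \<le> ln (real m / \<beta>)" using b m by simp
  qed
  have lam: "lam \<le> 6 * S" "lam > 0" unfolding lam_def S_def using lam_bound[of T \<epsilon> \<delta>] T e d by auto
  have S: "S \<ge> 1/2"
  proof -
    have "ln 2 \<le> ln (1 / \<delta>)" using d by (subst ln_le_cancel_iff) (auto simp: field_simps)
    then have "ln (1 / \<delta>) \<ge> 1/2" using ln2_ge by linarith
    then have q4: "real T * ln (1 / \<delta>) \<ge> 1/4" using mult_mono[of 1 "real T" "1/2" "ln (1 / \<delta>)"] T by simp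
    then have "sqrt (real T * ln (1 / \<delta>)) \<ge> sqrt (1/4)" by (rule real_sqrt_le_mono)
    moreover have "sqrt (1/4 :: real) = 1/2" by (simp add: real_sqrt_divide)
    ultimately have sq: "sqrt (real T * ln (1 / \<delta>)) \<ge> 1/2" by simp
    moreover have "sqrt (real T * ln (1 / \<delta>)) / \<epsilon> \<ge> sqrt (real T * ln (1 / \<delta>))"
      using e mult_left_le[of \<epsilon> "sqrt (real T * ln (1 / \<delta>))"] sq q4 by (simp add: le_divide_eq)
    ultimately show ?thesis unfolding S_def by linarith
  qed
  have w: "svt_w m T \<epsilon> \<delta> = 3 * lam * ln (2 * (real m + real T) / \<delta>)" unfolding svt_w_def lam_def by simp
  have "svt_w m T \<epsilon> \<delta> + lam * ln (real T / \<beta>) + 2 * lam * ln (real m / \<beta>)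
        \<le> 3 * lam * (3 * Lam) + lam * Lam + 2 * lam * Lam"
    unfolding w using l1 l2 l3 lam
    by (intro add_mono mult_left_mono) auto
  also have "\<dots> = 12 * (lam * Lam)" by (simp add: algebra_simps)
  also have "\<dots> \<le> 12 * (6 * S * Lam)" using lam Lam by (intro mult_left_mono mult_right_mono) auto
  also have "\<dots> \<le> real K / 6 - 1"
  proof -
    have "S * Lam \<ge> 1/4" using mult_mono[OF S Lam] S by simp
    moreover have "real K \<ge> 500 * (S * Lam)" using K unfolding S_def Lam_def M_def mu_def by (simp add: algebra_simps)
    ultimately show ?thesis by linarith
  qed
  finally show "svt_w m T \<epsilon> \<delta> + svt_lambda T \<epsilon> \<delta> * ln (real T / \<beta>) + 2 * svt_lambda T \<epsilon> \<delta> * ln (real m / \<beta>)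
           \<le> real K / 6 - 1" unfolding lam_def .
  have "S * Lam \<ge> 1/4" using mult_mono[OF S Lam] S by simp
  moreover have "real K \<ge> 500 * (S * Lam)" using K unfolding S_def Lam_def M_def mu_def by (simp add: algebra_simps)
  ultimately have "real K > 0" by linarith
  then show "K > 0" by simp
  show "ln (real m * real T / min \<delta> \<beta>) * (sqrt (real T * ln (1 / \<delta>)) / \<epsilon>) \<ge> 1/4"
    using mult_mono[OF S Lam] S unfolding S_def Lam_def M_def mu_def by (simp add: mult.commute)
  show "ln (real m * real T / min \<delta> \<beta>) \<ge> 0" using Lam unfolding Lam_def M_def mu_def by simp
qed

lemma ge1_mult: "(a::real) \<ge> 1 \<Longrightarrow> b \<ge> 1 \<Longrightarrow> a * b \<ge> 1"
  using mult_mono[of 1 a 1 b] by simp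

lemma le_mult_ge1: "(x::real) \<ge> 0 \<Longrightarrow> y \<ge> 1 \<Longrightarrow> x \<le> x * y"
  using mult_left_mono[of 1 y x] by simp

lemma div_ge1_le: "(x::real) \<ge> 0 \<Longrightarrow> y \<ge> 1 \<Longrightarrow> x / y \<le> x"
  by (simp add: divide_le_eq le_mult_ge1)

lemma le_div_le1: "(x::real) \<ge> 0 \<Longrightarrow> 0 < c \<Longrightarrow> c \<le> 1 \<Longrightarrow> x \<le> x / c"
  by (simp add: le_divide_eq mult_left_le)

lemma aux_frac: "(a::real) \<noteq> 0 \<Longrightarrow> b \<noteq> 0 \<Longrightarrow> 2 / a * (a / (2 * b)) = 1 / b"
  by (simp add: field_simps)

lemma tbound:
  fixes \<tau> C c2 \<epsilon> \<delta> \<beta> \<gamma> :: real and m n d T K :: nat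
  assumes tau: "0 \<le> \<tau>" "\<tau> \<le> 1" and C: "C > 0" and c2: "c2 > 0"
    and dn: "1 \<le> d" "d \<le> n" and e: "0 < \<epsilon>" "\<epsilon> \<le> 1" and dl: "0 < \<delta>" "\<delta> \<le> 1/2"
    and b: "0 < \<beta>" "\<beta> < 1" and g: "0 < \<gamma>" "\<gamma> < 1" and m: "1 \<le> m" and T: "1 \<le> T" and K1: "1 \<le> K"
    and K: "real K \<le> 504 * ln (real m * real T / min \<delta> \<beta>) * (sqrt (real T * ln (1 / \<delta>)) / \<epsilon>)"
    and Lam0: "ln (real m * real T / min \<delta> \<beta>) \<ge> 0"
    and TT: "real T \<ge> (193536 * c2 * C + 96 * c2 + 1)\<^sup>2 * max 1 ((real m powr (2 - \<tau>) * real d powr \<tau> / (real n * \<epsilon>) powr \<tau>)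
                              powr (2 / (4 - 3 * \<tau>)))
              * (ln (real K * real m * real n * real T / (\<gamma> * \<beta> * \<delta>))) ^ 6"
  shows "3 * (c2 * max (real m * (C * ((real d * real K * ln (real n / real d) + ln (real K / \<gamma>)) / real n)
                      powr (\<tau> / (2 - \<tau>)))) (ln (real K / \<gamma>))) < real T"
proof -
  define cT where "cT = (193536 * c2 * C + 96 * c2 + 1)\<^sup>2"
  define Q where "Q = real K * real m * real n * real T / (\<gamma> * \<beta> * \<delta>)"
  define L where "L = ln Q"
  define Lam where "Lam = ln (real m * real T / min \<delta> \<beta>)"
  define l where "l = ln (1 / \<delta>)"
  define q where "q = \<tau> / (2 - \<tau>)"
  define r where "r = 1 - q / 2"
  define u where "u = real d / (real n * \<epsilon>)"
  define A where "A = (real m powr (2 - \<tau>) * real d powr \<tau> / (real n * \<epsilon>) powr \<tau>) powr (2 / (4 - 3 * \<tau>))"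
  define X where "X = (real d * real K * ln (real n / real d) + ln (real K / \<gamma>)) / real n"
  have n1: "real n \<ge> 1" using dn by simp
  have d1: "real d \<ge> 1" using dn by simp
  have m1: "real m \<ge> 1" using m by simp
  have T1: "real T \<ge> 1" using T by simp
  have K1': "real K \<ge> 1" using K1 by simp
  have gbd: "\<gamma> * \<beta> * \<delta> > 0" "\<gamma> * \<beta> * \<delta> \<le> 1/2"
  proof -
    show "\<gamma> * \<beta> * \<delta> > 0" using g b dl by simp
    have "\<gamma> * \<beta> \<le> 1" using g b by (simp add: mult_le_one)
    then show "\<gamma> * \<beta> * \<delta> \<le> 1/2" using dl g b mult_mono[of "\<gamma> * \<beta>" 1 \<delta> "1/2"] by simp
  qed
  have P1: "real K * real m * real n * real T \<ge> 1" using K1' m1 n1 T1 by (intro ge1_mult) auto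
  have Q2: "Q \<ge> 2"
  proof -
    have "2 \<le> 1 / (\<gamma> * \<beta> * \<delta>)" using gbd by (simp add: field_simps)
    also have "\<dots> \<le> Q" unfolding Q_def using gbd P1 by (intro divide_right_mono) auto
    finally show ?thesis .
  qed
  have Qpos: "Q > 0" using Q2 by simp
  have lnQ: "\<And>z. 0 < z \<Longrightarrow> z \<le> Q \<Longrightarrow> ln z \<le> L" unfolding L_def using Qpos by simp
  have L12: "L \<ge> 1/2"
  proof -
    have "ln 2 \<le> L" using lnQ[of 2] Q2 by simp
    then show ?thesis using ln2_ge by linarith
  qed
  have Lpos: "L > 0" using L12 by simp
  have Kg: "ln (real K / \<gamma>) \<le> L" "ln (real K / \<gamma>) > 0"
  proof -
    have "real K / \<gamma> \<le> Q"
    proof -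
      have "real K / \<gamma> = real K / \<gamma> * 1" by simp
      also have "\<dots> \<le> real K / \<gamma> * (real m * real n * real T / (\<beta> * \<delta>))"
      proof (rule mult_left_mono)
        have "real m * real n * real T \<ge> 1" using m1 n1 T1 by (intro ge1_mult) auto
        moreover have "\<beta> * \<delta> \<le> 1" using b dl by (simp add: mult_le_one)
        ultimately show "1 \<le> real m * real n * real T / (\<beta> * \<delta>)" using b dl by (simp add: field_simps)
      qed (use g in simp)
      also have "\<dots> = Q" unfolding Q_def by (simp add: field_simps)
      finally show ?thesis .
    qed
    then show "ln (real K / \<gamma>) \<le> L" using lnQ K1' g by simp
    have "real K / \<gamma> > 1" using K1' g by (simp add: field_simps)
    then show "ln (real K / \<gamma>) > 0" by simp
  qed
  have nd: "ln (real n / real d) \<le> L" "ln (real n / real d) \<ge> 0"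
  proof -
    have "real n / real d \<le> real n" using d1 by (intro div_ge1_le) auto
    also have "real n \<le> Q"
    proof -
      have "real n \<le> real n * (real K * real m * real T)" using K1' m1 T1 by (intro le_mult_ge1 ge1_mult) auto
      also have "\<dots> = real K * real m * real n * real T" by (simp add: algebra_simps)
      also have "\<dots> \<le> Q" unfolding Q_def using gbd P1 by (intro le_div_le1) auto
      finally show ?thesis .
    qed
    finally show "ln (real n / real d) \<le> L" using lnQ d1 n1 by simp
    show "ln (real n / real d) \<ge> 0" using dn by simp
  qed
  have LamL: "Lam \<le> L"
  proof -
    have mb: "min \<delta> \<beta> \<ge> \<beta> * \<delta>" using b dl by (auto simp: mult_le_cancel_left1 mult_le_cancel_right1 mult_left_le mult_right_le_one_le)
    have "real m * real T / min \<delta> \<beta> \<le> real m * real T / (\<beta> * \<delta>)"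
      using mb b dl m1 T1 by (intro divide_left_mono) auto
    also have "\<dots> \<le> real m * real T / (\<beta> * \<delta>) * (real K * real n / \<gamma>)"
    proof (rule le_mult_ge1)
      show "0 \<le> real m * real T / (\<beta> * \<delta>)" using b dl by simp
      have "real K * real n \<ge> 1" using K1' n1 by (intro ge1_mult) auto
      then show "1 \<le> real K * real n / \<gamma>" using g by (simp add: le_divide_eq) 
    qed
    also have "\<dots> = Q" unfolding Q_def using b dl g by (simp add: field_simps)
    finally have "real m * real T / min \<delta> \<beta> \<le> Q" .
    moreover have "real m * real T / min \<delta> \<beta> > 0" using m1 T1 b dl by simp
    ultimately show ?thesis unfolding Lam_def using lnQ by simp
  qed
  have lL: "l \<le> L" "l \<ge> 0"
  proof -
    have "1 / \<delta> \<le> 1 / (\<gamma> * \<beta> * \<delta>)"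
    proof -
      have "\<gamma> * \<beta> * \<delta> \<le> \<delta>" using g b dl by (simp add: mult_le_one mult_left_le_one_le)
      then show ?thesis using gbd by (intro divide_left_mono) auto
    qed
    also have "\<dots> \<le> Q" unfolding Q_def using gbd P1 by (intro divide_right_mono) auto
    finally show "l \<le> L" unfolding l_def using lnQ dl by simp
    show "l \<ge> 0" unfolding l_def using dl by simp
  qed
  have K2: "real K \<le> 504 * (L powr (3/2) * real T powr (1/2) / \<epsilon>)"
  proof -
    have "Lam * (sqrt (real T * l) / \<epsilon>) \<le> L * (sqrt (real T * L) / \<epsilon>)"
    proof (rule mult_mono)
      show "Lam \<le> L" by (rule LamL)
      have "real T * l \<le> real T * L" using lL T1 by simp
      then have "sqrt (real T * l) \<le> sqrt (real T * L)" by (rule real_sqrt_le_mono)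
      then show "sqrt (real T * l) / \<epsilon> \<le> sqrt (real T * L) / \<epsilon>" using e by (simp add: divide_right_mono)
      show "0 \<le> L" using Lpos by simp
      show "0 \<le> sqrt (real T * l) / \<epsilon>" using lL e by simp
    qed
    also have "sqrt (real T * L) = real T powr (1/2) * L powr (1/2)"
      using Lpos by (simp add: powr_half_sqrt powr_mult real_sqrt_mult)
    also have "L * (real T powr (1/2) * L powr (1/2) / \<epsilon>) = (L * L powr (1/2)) * real T powr (1/2) / \<epsilon>"
      by (simp add: algebra_simps)
    also have "L * L powr (1/2) = L powr (3/2)" using Lpos by (simp add: powr_mult_base)
    finally have "Lam * (sqrt (real T * l) / \<epsilon>) \<le> L powr (3/2) * real T powr (1/2) / \<epsilon>" .
    then have "504 * (Lam * (sqrt (real T * l) / \<epsilon>)) \<le> 504 * (L powr (3/2) * real T powr (1/2) / \<epsilon>)" by simp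
    moreover have "real K \<le> 504 * (Lam * (sqrt (real T * l) / \<epsilon>))" using K unfolding Lam_def l_def by (simp add: algebra_simps)
    ultimately show ?thesis by linarith
  qed
  have X0: "X \<ge> 0" unfolding X_def using nd Kg by simp
  have X1: "X \<le> 1008 * u * L powr (5/2) * real T powr (1/2)"
  proof -
    have dK: "real d * real K \<ge> 1" using d1 K1' by (intro ge1_mult) auto
    have "real d * real K * ln (real n / real d) \<le> real d * real K * L" using nd dK by (intro mult_left_mono) auto
    moreover have "ln (real K / \<gamma>) \<le> real d * real K * L"
    proof -
      have "L * 1 \<le> L * (real d * real K)" using Lpos dK by (intro mult_left_mono) auto
      then have "L \<le> real d * real K * L" by (simp add: algebra_simps)
      then show ?thesis using Kg by linarith
    qed
    ultimately have "X \<le> 2 * (real d * real K * L) / real n" unfolding X_def using n1 by (intro divide_right_mono) auto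
    also have "\<dots> \<le> 2 * (real d * (504 * (L powr (3/2) * real T powr (1/2) / \<epsilon>)) * L) / real n"
      using K2 Lpos d1 n1 by (intro divide_right_mono mult_left_mono mult_right_mono) auto
    also have "\<dots> = 1008 * u * (L * L powr (3/2)) * real T powr (1/2)"
      unfolding u_def using e n1 by (simp add: field_simps)
    also have "L * L powr (3/2) = L powr (5/2)" using Lpos by (simp add: powr_mult_base)
    finally show ?thesis .
  qed
  have q01: "0 \<le> q" "q \<le> 1" unfolding q_def using tau by (auto simp: divide_le_eq)
  have r12: "r \<ge> 1/2" "r \<le> 1" unfolding r_def using q01 by auto
  have upos: "u > 0" unfolding u_def using d1 n1 e by simp
  have Tpos: "real T > 0" using T1 by simp
  have S4: "X powr q \<le> 1008 * u powr q * L powr (5/2 * q) * real T powr (q/2)"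
  proof -
    have "X powr q \<le> (1008 * u * L powr (5/2) * real T powr (1/2)) powr q"
      by (rule powr_mono2[OF q01(1) X0 X1])
    also have "\<dots> = 1008 powr q * u powr q * (L powr (5/2)) powr q * (real T powr (1/2)) powr q"
      by (simp add: powr_mult)
    also have "(L powr (5/2)) powr q = L powr (5/2 * q)" by (simp add: powr_powr)
    also have "(real T powr (1/2)) powr q = real T powr (q/2)" by (simp add: powr_powr)
    also have "1008 powr q \<le> (1008::real)"
      using powr_mono[OF q01(2), of 1008] by simp
    finally show ?thesis by (simp add: mult_right_mono)
  qed
  have S5: "real m * u powr q = A powr r"
  proof -
    have t2: "2 - \<tau> > 0" "4 - 3 * \<tau> > 0" using tau by auto
    have t3: "4 - 3 * \<tau> \<noteq> 0" "2 - \<tau> \<noteq> 0" using t2 by auto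
    have r': "r = (4 - 3 * \<tau>) / (2 * (2 - \<tau>))" unfolding r_def q_def using t3 by (simp add: field_simps)
    have ex: "2 / (4 - 3 * \<tau>) * r = 1 / (2 - \<tau>)" unfolding r' using t3 by (rule aux_frac)
    have base: "real m powr (2 - \<tau>) * real d powr \<tau> / (real n * \<epsilon>) powr \<tau> = real m powr (2 - \<tau>) * u powr \<tau>"
      unfolding u_def by (simp add: powr_divide)
    have "A powr r = (real m powr (2 - \<tau>) * u powr \<tau>) powr (1 / (2 - \<tau>))"
      unfolding A_def base powr_powr ex ..
    also have "\<dots> = real m powr ((2 - \<tau>) * (1 / (2 - \<tau>))) * u powr (\<tau> * (1 / (2 - \<tau>)))"
      by (simp add: powr_mult powr_powr)
    also have "\<dots> = real m * u powr q" unfolding q_def using t2 m1 by simp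
    finally show ?thesis ..
  qed
  define s where "s = 193536 * c2 * C + 96 * c2 + 1"
  have s1: "s \<ge> 1" unfolding s_def using c2 C by simp
  have cT: "cT = s\<^sup>2" unfolding cT_def s_def ..
  have cT1: "cT \<ge> s" unfolding cT using s1 by (simp add: power2_eq_square le_mult_ge1)
  have scT: "sqrt cT = s" unfolding cT using s1 by simp
  have TT': "real T \<ge> cT * max 1 A * L ^ 6" using TT unfolding cT_def A_def L_def Q_def .
  have L6: "L ^ 6 > 0" using Lpos by simp
  have A0: "A \<ge> 0" unfolding A_def by simp
  have cTpos: "cT > 0" using cT1 s1 by simp
  have S6: "A powr r \<le> real T powr r / (cT powr r * L powr (6 * r))"
  proof -
    have "A * (cT * L ^ 6) \<le> cT * max 1 A * L ^ 6" using cTpos L6 by (simp add: mult_right_mono algebra_simps)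
    then have "A * (cT * L ^ 6) \<le> real T" using TT' by linarith
    then have "A \<le> real T / (cT * L ^ 6)" using cTpos L6 by (simp add: pos_le_divide_eq)
    then have "A powr r \<le> (real T / (cT * L ^ 6)) powr r" using A0 r12 by (intro powr_mono2) auto
    also have "\<dots> = real T powr r / (cT powr r * (L ^ 6) powr r)" by (simp add: powr_divide powr_mult)
    also have "(L ^ 6) powr r = L powr (6 * r)"
    proof -
      have "L ^ 6 = L powr 6" using powr_realpow[OF Lpos, of 6] by simp
      then show ?thesis by (simp add: powr_powr)
    qed
    finally show ?thesis .
  qed
  have S7: "real m * X powr q \<le> 64512 * real T / s"
  proof -
    have "real m * X powr q \<le> real m * (1008 * u powr q * L powr (5/2 * q) * real T powr (q/2))"
      using S4 m1 by (intro mult_left_mono) auto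
    also have "\<dots> = 1008 * (real m * u powr q) * L powr (5/2 * q) * real T powr (q/2)" by (simp add: algebra_simps)
    also have "\<dots> = 1008 * A powr r * L powr (5/2 * q) * real T powr (q/2)" unfolding S5 ..
    also have "\<dots> \<le> 1008 * (real T powr r / (cT powr r * L powr (6 * r))) * L powr (5/2 * q) * real T powr (q/2)"
      using S6 by (intro mult_right_mono mult_left_mono) auto
    also have "\<dots> = 1008 * (real T powr r * real T powr (q/2)) * (L powr (5/2 * q) / L powr (6 * r)) / cT powr r"
      by (simp add: field_simps)
    also have "real T powr r * real T powr (q/2) = real T"
      unfolding powr_add[symmetric] r_def using Tpos by simp
    also have "L powr (5/2 * q) / L powr (6 * r) = L powr (5/2 * q - 6 * r)" by (simp add: powr_diff)
    finally have h1: "real m * X powr q \<le> 1008 * real T * L powr (5/2 * q - 6 * r) / cT powr r" .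
    have h2: "L powr (5/2 * q - 6 * r) \<le> 64"
    proof -
      have e0: "5/2 * q - 6 * r \<le> 0" using q01 r12 by linarith
      have e6: "- (5/2 * q - 6 * r) \<le> 6" unfolding r_def using q01 by (simp add: algebra_simps)
      have "L powr (5/2 * q - 6 * r) \<le> (1/2) powr (5/2 * q - 6 * r)"
        by (rule powr_mono2'[OF e0]) (use L12 in auto)
      also have "(1/2::real) powr (5/2 * q - 6 * r) = 1 / 2 powr (5/2 * q - 6 * r)"
        by (simp add: powr_divide)
      also have "\<dots> = 2 powr (- (5/2 * q - 6 * r))" by (rule powr_minus_divide[symmetric])
      also have "\<dots> \<le> 2 powr 6" by (rule powr_mono[OF e6]) simp
      also have "(2::real) powr 6 = 64" using powr_realpow[of 2 6] by simp
      finally show ?thesis .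
    qed
    have h3: "cT powr r \<ge> s"
    proof -
      have "cT powr (1/2) \<le> cT powr r" using r12 cT1 s1 by (intro powr_mono) auto
      moreover have "cT powr (1/2) = s" using cTpos scT by (simp add: powr_half_sqrt)
      ultimately show ?thesis by simp
    qed
    have "1008 * real T * L powr (5/2 * q - 6 * r) / cT powr r \<le> 1008 * real T * 64 / cT powr r"
      using h2 Tpos by (intro divide_right_mono mult_left_mono) auto
    also have "\<dots> \<le> 1008 * real T * 64 / s"
    proof (rule divide_left_mono)
      show "s \<le> cT powr r" by (rule h3)
      show "0 \<le> 1008 * real T * 64" by simp
      show "0 < cT powr r * s" using h3 s1 by (intro mult_pos_pos) auto
    qed
    finally show ?thesis using h1 by simp
  qed
  have B1: "3 * (c2 * (real m * (C * X powr q))) < real T"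
  proof -
    have "3 * (c2 * (real m * (C * X powr q))) = (3 * c2 * C) * (real m * X powr q)" by (simp add: algebra_simps)
    also have "\<dots> \<le> (3 * c2 * C) * (64512 * real T / s)" using S7 c2 C by (intro mult_left_mono) auto
    also have "\<dots> = (193536 * c2 * C) * real T / s" by simp
    also have "\<dots> < s * real T / s"
    proof -
      have "193536 * c2 * C < s" unfolding s_def using c2 by simp
      then show ?thesis using Tpos s1 by (intro divide_strict_right_mono mult_strict_right_mono) auto
    qed
    also have "\<dots> = real T" using s1 by simp
    finally show ?thesis .
  qed
  have B2: "3 * (c2 * ln (real K / \<gamma>)) < real T"
  proof -
    have "(1/2::real) ^ 5 \<le> L ^ 5" by (rule power_mono) (use L12 in auto)
    moreover have "(1/2::real) ^ 5 = 1/32" by (simp add: power_divide)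
    ultimately have p5: "1/32 \<le> L ^ 5" by linarith
    have "L * (1/32) \<le> L * L ^ 5" using Lpos p5 by (intro mult_left_mono) auto
    then have L6: "L ^ 6 \<ge> L / 32" by (simp add: power_Suc[symmetric] del: power_Suc)
    have "0 \<le> 193536 * c2 * C" using c2 C by simp
    then have "cT \<ge> 96 * c2 + 1" using cT1 unfolding s_def by linarith
    have "3 * (c2 * ln (real K / \<gamma>)) \<le> 3 * c2 * L" using Kg c2 by simp
    also have "\<dots> < (96 * c2 + 1) * (L / 32)" using Lpos c2 by (simp add: field_simps)
    also have "\<dots> \<le> cT * L ^ 6" using \<open>cT \<ge> 96 * c2 + 1\<close> L6 Lpos c2 by (intro mult_mono) auto
    also have "\<dots> \<le> cT * max 1 A * L ^ 6" using cTpos L6 by (intro mult_right_mono mult_left_mono) auto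
    also have "\<dots> \<le> real T" by (rule TT')
    finally show ?thesis .
  qed
  have "3 * (c2 * max (real m * (C * X powr q)) (ln (real K / \<gamma>))) < real T"
    using B1 B2 by (simp add: max_def)
  then show ?thesis unfolding X_def q_def .
qed

lemma core:
  fixes \<tau> C c2 \<epsilon> \<delta> \<beta> \<gamma> :: real and m n d T K :: nat and hs :: "nat \<Rightarrow> 'a \<Rightarrow> bool"
    and hstar :: "'a \<Rightarrow> bool" and x :: "nat \<Rightarrow> 'a" and Dis' :: "nat \<Rightarrow> real"
  assumes tau: "0 \<le> \<tau>" "\<tau> \<le> 1" and C: "C > 0" and c2: "c2 > 0"
    and dn: "1 \<le> d" "d \<le> n" and e: "0 < \<epsilon>" "\<epsilon> \<le> 1" and dl: "0 < \<delta>" "\<delta> \<le> 1/2"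
    and b: "0 < \<beta>" "\<beta> < 1" and g: "0 < \<gamma>" "\<gamma> < 1" and m: "1 \<le> m" and T: "1 \<le> T"
    and Kdef: "K = nat \<lceil>500 * ln (real m * real T / min \<delta> \<beta>) * sqrt (real T * ln (1 / \<delta>)) / \<epsilon>\<rceil>"
    and TT: "real T \<ge> (193536 * c2 * C + 96 * c2 + 1)\<^sup>2 * max 1 ((real m powr (2 - \<tau>) * real d powr \<tau> / (real n * \<epsilon>) powr \<tau>)
                              powr (2 / (4 - 3 * \<tau>)))
              * (ln (real K * real m * real n * real T / (\<gamma> * \<beta> * \<delta>))) ^ 6"
    and Dis: "\<And>k. k < K \<Longrightarrow> Dis' k
               \<le> C * ((real d * real K * ln (real n / real d) + ln (real K / \<gamma>)) / real n)
                      powr (\<tau> / (2 - \<tau>))"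
    and Dis0: "\<And>k. k < K \<Longrightarrow> Dis' k \<ge> 0"
    and cards: "\<And>k. k < K \<Longrightarrow> real (card {j. j < m \<and> hs k (x j) \<noteq> hstar (x j)})
               \<le> c2 * max (real m * Dis' k) (ln (real K / \<gamma>))"
  shows "measure (svt_noise T m (svt_lambda T \<epsilon> \<delta>))
          {\<omega> \<in> space (svt_noise T m (svt_lambda T \<epsilon> \<delta>)).
          svt_cnt hs K T (svt_w m T \<epsilon> \<delta>) (fst \<omega>) (snd \<omega>) x m < T \<and>
          (\<forall>r :: nat \<Rightarrow> bool.
             card {j. j < m \<and> (case svt_out hs K T (svt_w m T \<epsilon> \<delta>) (fst \<omega>) (snd \<omega>) x j of Some b \<Rightarrow> b | None \<Rightarrow> r j)
                              \<noteq> hstar (x j)} \<le> T)} \<ge> 1 - \<beta>"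
proof -
  define lam where "lam = svt_lambda T \<epsilon> \<delta>"
  define w where "w = svt_w m T \<epsilon> \<delta>"
  define N where "N = svt_noise T m lam"
  define t1 where "t1 = lam * ln (real T / \<beta>)"
  define t2 where "t2 = 2 * lam * ln (real m / \<beta>)"
  define z where "z = 500 * ln (real m * real T / min \<delta> \<beta>) * (sqrt (real T * ln (1 / \<delta>)) / \<epsilon>)"
  have Kz: "K = nat \<lceil>z\<rceil>" unfolding Kdef z_def by simp
  have Kge: "real K \<ge> z" unfolding Kz by (rule real_nat_ceiling_ge)
  note th = thr[OF m T e dl b Kge[unfolded z_def]]
  have lam0: "lam > 0" unfolding lam_def using lam_bound[of T \<epsilon> \<delta>] T e dl by simp
  have hw: "w + t1 + t2 \<le> real K / 6 - 1" using th(1) unfolding w_def t1_def t2_def lam_def .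
  have K0: "K > 0" by (rule th(2))
  have Kle: "real K \<le> 504 * ln (real m * real T / min \<delta> \<beta>) * (sqrt (real T * ln (1 / \<delta>)) / \<epsilon>)"
  proof -
    have z0: "z \<ge> 0" unfolding z_def using th(4) dl e by simp
    have "real K = real_of_int \<lceil>z\<rceil>" unfolding Kz using z0 by simp
    also have "\<dots> \<le> z + 1" by simp
    also have "\<dots> \<le> 504 * ln (real m * real T / min \<delta> \<beta>) * (sqrt (real T * ln (1 / \<delta>)) / \<epsilon>)"
    proof -
      define P where "P = ln (real m * real T / min \<delta> \<beta>) * (sqrt (real T * ln (1 / \<delta>)) / \<epsilon>)"
      have "z = 500 * P" unfolding z_def P_def by (simp only: mult.assoc)
      moreover have "504 * ln (real m * real T / min \<delta> \<beta>) * (sqrt (real T * ln (1 / \<delta>)) / \<epsilon>) = 504 * P"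
        unfolding P_def by (simp only: mult.assoc)
      moreover have "P \<ge> 1/4" unfolding P_def by (rule th(3))
      ultimately show ?thesis by linarith
    qed
    finally show ?thesis .
  qed
  define Eb where "Eb = c2 * max (real m * (C * ((real d * real K * ln (real n / real d) + ln (real K / \<gamma>)) / real n)
                      powr (\<tau> / (2 - \<tau>)))) (ln (real K / \<gamma>))"
  have Eb: "3 * Eb < real T" unfolding Eb_def
    by (rule tbound[OF tau C c2 dn e dl b g m T _ Kle th(4) TT]) (use K0 in simp)
  have cardE: "real (card {j. j < m \<and> hs k (x j) \<noteq> hstar (x j)}) \<le> Eb" if k: "k < K" for k
  proof -
    have "real m * Dis' k \<le> real m * (C * ((real d * real K * ln (real n / real d) + ln (real K / \<gamma>)) / real n)
                      powr (\<tau> / (2 - \<tau>)))" using Dis[OF k] by (intro mult_left_mono) auto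
    then have "max (real m * Dis' k) (ln (real K / \<gamma>)) \<le> max (real m * (C * ((real d * real K * ln (real n / real d) + ln (real K / \<gamma>)) / real n)
                      powr (\<tau> / (2 - \<tau>)))) (ln (real K / \<gamma>))" by (rule max.mono) simp
    then show ?thesis using cards[OF k] c2 unfolding Eb_def by (meson mult_left_mono less_imp_le order_trans)
  qed
  have Bc: "card {j. j < m \<and> real K \<le> 3 * real (card {k. k < K \<and> hs k (x j) \<noteq> hstar (x j)})} < T"
  proof -
    have "real (card {j. j < m \<and> real K \<le> 3 * real (card {k. k < K \<and> hs k (x j) \<noteq> hstar (x j)})}) \<le> 3 * Eb"
      by (rule double_count[where hs=hs and x=x and hstar=hstar and m=m, OF K0 cardE])
    then show ?thesis using Eb by linarith
  qed
  have t1: "t1 \<ge> 0" unfolding t1_def using lam0 b T by simp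
  have t2: "t2 \<ge> 0" unfolding t2_def using lam0 b m by simp
  have e1: "real T * exp (- t1 / lam) \<le> \<beta>"
  proof -
    have a: "- t1 / lam = - ln (real T / \<beta>)" unfolding t1_def using lam0 by simp
    have "exp (- ln (real T / \<beta>)) = inverse (real T / \<beta>)" using b T by (simp add: exp_minus)
    then have "exp (- t1 / lam) = \<beta> / real T" unfolding a by simp
    then show ?thesis using T by simp
  qed
  have e2: "real m * exp (- t2 / (2 * lam)) \<le> \<beta>"
  proof -
    have a: "- t2 / (2 * lam) = - ln (real m / \<beta>)" unfolding t2_def using lam0 by simp
    have "exp (- ln (real m / \<beta>)) = inverse (real m / \<beta>)" using b m by (simp add: exp_minus)
    then have "exp (- t2 / (2 * lam)) = \<beta> / real m" unfolding a by simp
    then show ?thesis using m by simp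
  qed
  let ?G = "{\<omega> \<in> space N. svt_cnt hs K T w (fst \<omega>) (snd \<omega>) x m < T \<and>
      card {j. j < m \<and> svt_out hs K T w (fst \<omega>) (snd \<omega>) x j \<noteq> Some (hstar (x j))} \<le> T}"
  have Geq: "{\<omega> \<in> space N.
          svt_cnt hs K T w (fst \<omega>) (snd \<omega>) x m < T \<and>
          (\<forall>r :: nat \<Rightarrow> bool.
             card {j. j < m \<and> (case svt_out hs K T w (fst \<omega>) (snd \<omega>) x j of Some b \<Rightarrow> b | None \<Rightarrow> r j)
                              \<noteq> hstar (x j)} \<le> T)} = ?G"
  proof (rule Collect_cong)
    fix \<omega>
    show "(\<omega> \<in> space N \<and> svt_cnt hs K T w (fst \<omega>) (snd \<omega>) x m < T \<and>
          (\<forall>r :: nat \<Rightarrow> bool.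
             card {j. j < m \<and> (case svt_out hs K T w (fst \<omega>) (snd \<omega>) x j of Some b \<Rightarrow> b | None \<Rightarrow> r j)
                              \<noteq> hstar (x j)} \<le> T)) =
          (\<omega> \<in> space N \<and> svt_cnt hs K T w (fst \<omega>) (snd \<omega>) x m < T \<and>
      card {j. j < m \<and> svt_out hs K T w (fst \<omega>) (snd \<omega>) x j \<noteq> Some (hstar (x j))} \<le> T)"
      using worst_r[where out="\<lambda>j. svt_out hs K T w (fst \<omega>) (snd \<omega>) x j" and h="\<lambda>j. hstar (x j)" and m=m and T=T]
      by simp
  qed
  have Gs: "?G \<in> sets N" unfolding N_def by (rule good_meas)
  have spN: "space N = (PiE {..<T} (\<lambda>_. UNIV)) \<times> (PiE {..<m} (\<lambda>_. UNIV))"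
    unfolding N_def svt_noise_def by (simp add: space_pair_measure space_PiM laplace_def)
  have sub: "(PiE {..<T} (\<lambda>_. {..t1})) \<times> (PiE {..<m} (\<lambda>_. {-t2..})) \<subseteq> ?G"
  proof
    fix \<omega> assume \<omega>: "\<omega> \<in> (PiE {..<T} (\<lambda>_. {..t1})) \<times> (PiE {..<m} (\<lambda>_. {-t2..}))"
    have nu: "\<And>c. c < T \<Longrightarrow> fst \<omega> c \<le> t1" using \<omega> by (auto simp: PiE_iff)
    have xi: "\<And>j. j < m \<Longrightarrow> snd \<omega> j \<ge> - t2" using \<omega> by (auto simp: PiE_iff)
    have inS: "\<omega> \<in> space N" unfolding spN using \<omega> by (auto simp: PiE_iff)
    note dm = det_main[where \<nu>="fst \<omega>" and \<xi>="snd \<omega>" and T=T and m=m and hs=hs and x=x and hstar=hstar and K=K and w=w, OF nu xi hw Bc]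
    show "\<omega> \<in> ?G" using inS dm by simp
  qed
  have "measure N ?G \<ge> 1 - \<beta>" unfolding N_def
    by (rule noise_bound[OF lam0 t1 t2 Gs[unfolded N_def] sub[unfolded N_def] e1 e2]) (use b in simp)
  then have "measure N {\<omega> \<in> space N.
          svt_cnt hs K T w (fst \<omega>) (snd \<omega>) x m < T \<and>
          (\<forall>r :: nat \<Rightarrow> bool.
             card {j. j < m \<and> (case svt_out hs K T w (fst \<omega>) (snd \<omega>) x j of Some b \<Rightarrow> b | None \<Rightarrow> r j)
                              \<noteq> hstar (x j)} \<le> T)} \<ge> 1 - \<beta>" unfolding Geq .
  then show ?thesis unfolding N_def lam_def w_def .
qed

theorem lemma15:
  fixes \<tau> \<eta> C c2 :: real
  assumes "0 \<le> \<tau>" and "\<tau> \<le> 1" and "\<eta> \<ge> 1" and "C > 0" and "c2 > 0"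
  shows "\<exists>cT cK :: real. \<exists>p :: nat. cT > 0 \<and> cK > 0 \<and>
    (\<forall>(MX :: 'a measure) (D :: ('a \<times> bool) measure) (H :: ('a \<Rightarrow> bool) set) (hstar :: 'a \<Rightarrow> bool)
       (d :: nat) (n :: nat) (S :: nat \<Rightarrow> 'a \<times> bool) (P :: nat \<Rightarrow> nat set) (K :: nat)
       (hs :: nat \<Rightarrow> 'a \<Rightarrow> bool) (m :: nat) (x :: nat \<Rightarrow> 'a) (\<epsilon> :: real) (\<delta> :: real)
       (\<beta> :: real) (\<gamma> :: real) (T :: nat).
      prob_space D \<and> sets D = sets (MX \<Otimes>\<^sub>M count_space UNIV) \<and>
      vc_dim H d \<and> 1 \<le> d \<and> d \<le> n \<and>
      hstar \<in> H \<and> bayes_optimal MX D hstar \<and> tsybakov D H hstar \<eta> \<tau> \<and>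
      0 < \<epsilon> \<and> \<epsilon> \<le> 1 \<and> 0 < \<delta> \<and> \<delta> \<le> 1/2 \<and> 0 < \<beta> \<and> \<beta> < 1 \<and> 0 < \<gamma> \<and> \<gamma> < 1 \<and> 1 \<le> m \<and>
      K = nat \<lceil>cK * ln (real m * real T / min \<delta> \<beta>) * sqrt (real T * ln (1 / \<delta>)) / \<epsilon>\<rceil> \<and>
      real T \<ge> cT * max 1 ((real m powr (2 - \<tau>) * real d powr \<tau> / (real n * \<epsilon>) powr \<tau>)
                              powr (2 / (4 - 3 * \<tau>)))
              * (ln (real K * real m * real n * real T / (\<gamma> * \<beta> * \<delta>))) ^ p \<and>
      even_split n K P \<and>
      (\<forall>k<K. hs k \<in> H \<and> (\<forall>g\<in>H. emp_err S (P k) (hs k) \<le> emp_err S (P k) g)) \<and>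
      (\<forall>k<K. Dis D (hs k) hstar
               \<le> C * ((real d * real K * ln (real n / real d) + ln (real K / \<gamma>)) / real n)
                      powr (\<tau> / (2 - \<tau>))) \<and>
      (\<forall>k<K. real (card {j. j < m \<and> hs k (x j) \<noteq> hstar (x j)})
               \<le> c2 * max (real m * Dis D (hs k) hstar) (ln (real K / \<gamma>)))
      \<longrightarrow>
      (let w = svt_w m T \<epsilon> \<delta>; N = svt_noise T m (svt_lambda T \<epsilon> \<delta>) in
       measure N {\<omega> \<in> space N.
          svt_cnt hs K T w (fst \<omega>) (snd \<omega>) x m < T \<and>
          (\<forall>r :: nat \<Rightarrow> bool.
             card {j. j < m \<and> (case svt_out hs K T w (fst \<omega>) (snd \<omega>) x j of Some b \<Rightarrow> b | None \<Rightarrow> r j)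
                              \<noteq> hstar (x j)} \<le> T)} \<ge> 1 - \<beta>))"
proof -
  define cT :: real where "cT = (193536 * c2 * C + 96 * c2 + 1)\<^sup>2"
  have "0 \<le> 193536 * c2 * C" using assms by simp
  then have "193536 * c2 * C + 96 * c2 + 1 > 0" using assms by linarith
  then have cTpos: "cT > 0" unfolding cT_def by simp
  show ?thesis
  proof (rule exI[of _ cT], rule exI[of _ "500::real"], rule exI[of _ "6::nat"], intro conjI allI impI)
    show "cT > 0" by (rule cTpos)
    show "(500::real) > 0" by simp
    fix MX :: "'a measure" and D :: "('a \<times> bool) measure" and H :: "('a \<Rightarrow> bool) set" and hstar :: "'a \<Rightarrow> bool"
      and d n :: nat and S :: "nat \<Rightarrow> 'a \<times> bool" and P :: "nat \<Rightarrow> nat set" and K :: nat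
      and hs :: "nat \<Rightarrow> 'a \<Rightarrow> bool" and m :: nat and x :: "nat \<Rightarrow> 'a" and \<epsilon> \<delta> \<beta> \<gamma> :: real and T :: nat
    assume H: "prob_space D \<and> sets D = sets (MX \<Otimes>\<^sub>M count_space UNIV) \<and>
      vc_dim H d \<and> 1 \<le> d \<and> d \<le> n \<and>
      hstar \<in> H \<and> bayes_optimal MX D hstar \<and> tsybakov D H hstar \<eta> \<tau> \<and>
      0 < \<epsilon> \<and> \<epsilon> \<le> 1 \<and> 0 < \<delta> \<and> \<delta> \<le> 1/2 \<and> 0 < \<beta> \<and> \<beta> < 1 \<and> 0 < \<gamma> \<and> \<gamma> < 1 \<and> 1 \<le> m \<and>
      K = nat \<lceil>500 * ln (real m * real T / min \<delta> \<beta>) * sqrt (real T * ln (1 / \<delta>)) / \<epsilon>\<rceil> \<and>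
      real T \<ge> cT * max 1 ((real m powr (2 - \<tau>) * real d powr \<tau> / (real n * \<epsilon>) powr \<tau>)
                              powr (2 / (4 - 3 * \<tau>)))
              * (ln (real K * real m * real n * real T / (\<gamma> * \<beta> * \<delta>))) ^ 6 \<and>
      even_split n K P \<and>
      (\<forall>k<K. hs k \<in> H \<and> (\<forall>g\<in>H. emp_err S (P k) (hs k) \<le> emp_err S (P k) g)) \<and>
      (\<forall>k<K. Dis D (hs k) hstar
               \<le> C * ((real d * real K * ln (real n / real d) + ln (real K / \<gamma>)) / real n)
                      powr (\<tau> / (2 - \<tau>))) \<and>
      (\<forall>k<K. real (card {j. j < m \<and> hs k (x j) \<noteq> hstar (x j)})
               \<le> c2 * max (real m * Dis D (hs k) hstar) (ln (real K / \<gamma>)))"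
    have dn: "1 \<le> d" "d \<le> n" using H by auto
    have e: "0 < \<epsilon>" "\<epsilon> \<le> 1" using H by auto
    have dl: "0 < \<delta>" "\<delta> \<le> 1/2" using H by auto
    have b: "0 < \<beta>" "\<beta> < 1" using H by auto
    have g: "0 < \<gamma>" "\<gamma> < 1" using H by auto
    have m: "1 \<le> m" using H by auto
    have Kdef: "K = nat \<lceil>500 * ln (real m * real T / min \<delta> \<beta>) * sqrt (real T * ln (1 / \<delta>)) / \<epsilon>\<rceil>"
      using H by blast
    have TT: "real T \<ge> (193536 * c2 * C + 96 * c2 + 1)\<^sup>2 * max 1 ((real m powr (2 - \<tau>) * real d powr \<tau> / (real n * \<epsilon>) powr \<tau>)
                              powr (2 / (4 - 3 * \<tau>)))
              * (ln (real K * real m * real n * real T / (\<gamma> * \<beta> * \<delta>))) ^ 6"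
      using H unfolding cT_def by blast
    have es: "even_split n K P" using H by blast
    have Dis: "\<And>k. k < K \<Longrightarrow> Dis D (hs k) hstar
               \<le> C * ((real d * real K * ln (real n / real d) + ln (real K / \<gamma>)) / real n)
                      powr (\<tau> / (2 - \<tau>))" using H by blast
    have cards: "\<And>k. k < K \<Longrightarrow> real (card {j. j < m \<and> hs k (x j) \<noteq> hstar (x j)})
               \<le> c2 * max (real m * Dis D (hs k) hstar) (ln (real K / \<gamma>))" using H by blast
    have Dis0: "\<And>k. k < K \<Longrightarrow> Dis D (hs k) hstar \<ge> 0" unfolding Dis_def by simp
    have T: "1 \<le> T"
    proof (rule ccontr)
      assume "\<not> 1 \<le> T"
      then have "T = 0" by simp
      then have "K = 0" using Kdef by simp
      then have "{..<n} = {}" using es unfolding even_split_def by simp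
      moreover have "0 \<in> {..<n}" using dn by simp
      ultimately show False by simp
    qed
    show "let w = svt_w m T \<epsilon> \<delta>; N = svt_noise T m (svt_lambda T \<epsilon> \<delta>) in
       measure N {\<omega> \<in> space N.
          svt_cnt hs K T w (fst \<omega>) (snd \<omega>) x m < T \<and>
          (\<forall>r :: nat \<Rightarrow> bool.
             card {j. j < m \<and> (case svt_out hs K T w (fst \<omega>) (snd \<omega>) x j of Some b \<Rightarrow> b | None \<Rightarrow> r j)
                              \<noteq> hstar (x j)} \<le> T)} \<ge> 1 - \<beta>"
      unfolding Let_def
      by (rule core[where Dis'="\<lambda>k. Dis D (hs k) hstar" and hs=hs and x=x and hstar=hstar and m=m and K=K, OF assms(1,2,4,5) dn e dl b g m T Kdef TT Dis Dis0 cards])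
  qed
qed

end
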